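(* Let $\mathcal{X}=[0,r]^d$ and let $f:\mathcal{X}\to\mathbb{R}$ be continuous with a unique maximizer $\bm{x}^*$, and suppose $c_{\mathrm{gap}}>0$ is such that $f(\bm{x}^* )>f(\tilde{\bm{x}})+c_{\mathrm{gap}}$ for every local maximizer $\tilde{\bm{x}}\neq\bm{x}^*$ of $f$ on $\mathcal{X}$. Then: (i) If $c_{\mathrm{lin}},\rho_{\mathrm{lin}}>0$ satisfy $f(\bm{x})\le f(\bm{x}^* )-c_{\mathrm{lin}}\|\bm{x}^*-\bm{x}\|_2$ for all $\bm{x}\in\mathcal{B}_2(\rho_{\mathrm{lin}};\bm{x}^* )$, then every $\bm{x}\in\mathcal{X}$ with $f(\bm{x}^* )-f(\bm{x})\le\varepsilon_1$, where $\varepsilon_1=\min\{c_{\mathrm{gap}},c_{\mathrm{lin}}\rho_{\mathrm{lin}}\}$, belongs to $\mathcal{B}_2(\rho_{\mathrm{lin}};\bm{x}^* )$. (ii) If $c_{\mathrm{quad}},\rho_{\mathrm{quad}}>0$ satisfy $f(\bm{x})\le f(\bm{x}^* )-c_{\mathrm{quad}}\|\bm{x}^*-\bm{x}\|_2^2$ for all $\bm{x}\in\mathcal{B}_2(\rho_{\mathrm{quad}};\bm{x}^* )$, then every $\bm{x}\in\mathcal{X}$ with $f(\bm{x}^* )-f(\bm{x})\le\varepsilon_2$, where $\varepsilon_2=\min\{c_{\mathrm{gap}},c_{\mathrm{quad}}\rho_{\mathrm{quad}}^2\}$, belongs to $\mathcal{B}_2(\rho_{\mathrm{quad}};\bm{x}^*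 )$.
   Context: $\mathcal{B}_2(\rho;\bm{x}^* )=\{\bm{x}\in\mathcal{X}:\|\bm{x}-\bm{x}^*\|_2\le\rho\}$. *)

theory Defs
  imports "HOL-Analysis.Analysis"
begin

text \<open>The box [0,r]^d, with d = CARD('n).\<close>
definition box_cube :: "real \<Rightarrow> (real ^ 'n) set" where
  "box_cube r = {x. \<forall>i. 0 \<le> x $ i \<and> x $ i \<le> r}"

definition local_maximizer_on :: "('a::metric_space \<Rightarrow> real) \<Rightarrow> 'a set \<Rightarrow> 'a \<Rightarrow> bool" where
  "local_maximizer_on f X x \<longleftrightarrow> x \<in> X \<and> (\<exists>e>0. \<forall>y\<in>X. dist y x < e \<longrightarrow> f y \<le> f x)"

definition ball2 :: "'a::real_normed_vector set \<Rightarrow> real \<Rightarrow> 'a \<Rightarrow> 'a set" where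
  "ball2 X \<rho> xs = {x \<in> X. norm (x - xs) \<le> \<rho>}"

end

theory Submission
  imports Defs
begin

lemma box_cube_compact: "compact (box_cube r)"
proof -
  have eq: "box_cube r = cbox 0 (\<chi> i. r)"
    by (auto simp: box_cube_def mem_box_cart)
  show ?thesis unfolding eq by (rule compact_cbox)
qed

lemma key:
  fixes f :: "real ^ 'n \<Rightarrow> real" and r c_gap \<rho> \<delta> :: real and xs x :: "real ^ 'n"
  assumes cont: "continuous_on (box_cube r) f"
    and gap: "\<forall>x'. local_maximizer_on f (box_cube r) x' \<and> x' \<noteq> xs \<longrightarrow> f xs > f x' + c_gap"
    and sph: "\<forall>y\<in>box_cube r. norm (y - xs) = \<rho> \<longrightarrow> f y \<le> f xs - \<delta>"
    and xX: "x \<in> box_cube r" and rpos: "\<rho> \<ge> 0"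
    and le: "f xs - f x \<le> min c_gap \<delta>"
  shows "x \<in> ball2 (box_cube r) \<rho> xs"
proof (rule ccontr)
  assume "x \<notin> ball2 (box_cube r) \<rho> xs"
  with xX have xo: "norm (x - xs) > \<rho>" by (auto simp: ball2_def)
  define K where "K = box_cube r \<inter> {y. \<rho> \<le> norm (y - xs)}"
  have cK: "compact K" unfolding K_def
    by (intro compact_Int_closed box_cube_compact closed_Collect_le continuous_intros)
  have xK: "x \<in> K" using xX xo by (auto simp: K_def)
  have "continuous_on K f" using cont by (rule continuous_on_subset) (auto simp: K_def)
  then obtain z where zK: "z \<in> K" and zmax: "\<forall>y\<in>K. f y \<le> f z"
    using continuous_attains_sup[OF cK] xK by blast
  have lm: False if wK: "w \<in> K" and wo: "norm (w - xs) > \<rho>" and wmax: "\<forall>y\<in>K. f y \<le> f w"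
      and wv: "f w \<ge> f x" for w
  proof -
    have "local_maximizer_on f (box_cube r) w"
      unfolding local_maximizer_on_def
    proof (intro conjI exI[of _ "norm (w - xs) - \<rho>"] ballI impI)
      show "w \<in> box_cube r" using wK by (simp add: K_def)
      show "0 < norm (w - xs) - \<rho>" using wo by simp
      fix y assume yX: "y \<in> box_cube r" and d: "dist y w < norm (w - xs) - \<rho>"
      have "norm (w - xs) \<le> norm (y - xs) + dist y w"
        by (metis dist_norm dist_commute dist_triangle)
      then have "y \<in> K" using yX d by (auto simp: K_def)
      then show "f y \<le> f w" using wmax by blast
    qed
    moreover have "w \<noteq> xs" using wo rpos by auto
    ultimately have "f xs > f w + c_gap" using gap by blast
    then show False using wv le by linarith
  qed
  show False
  proof (cases "norm (z - xs) > \<rho>")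
    case True
    show False by (rule lm[OF zK True zmax]) (use zmax xK in blast)
  next
    case False
    then have "norm (z - xs) = \<rho>" using zK by (auto simp: K_def)
    then have "f z \<le> f xs - \<delta>" using sph zK by (auto simp: K_def)
    then have "\<forall>y\<in>K. f y \<le> f x" using zmax le by fastforce
    then show False by (rule lm[OF xK xo]) simp
  qed
qed

theorem lemma15:
  fixes f :: "real ^ 'n \<Rightarrow> real" and r c_gap :: real and xs :: "real ^ 'n"
  assumes cont: "continuous_on (box_cube r) f"
    and xs_in: "xs \<in> box_cube r"
    and unique: "\<forall>x\<in>box_cube r. x \<noteq> xs \<longrightarrow> f x < f xs"
    and gap_pos: "c_gap > 0"
    and gap: "\<forall>x'. local_maximizer_on f (box_cube r) x' \<and> x' \<noteq> xs \<longrightarrow> f xs > f x' + c_gap"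
  shows "(\<forall>c_lin \<rho>_lin. c_lin > 0 \<and> \<rho>_lin > 0 \<and>
             (\<forall>x\<in>ball2 (box_cube r) \<rho>_lin xs. f x \<le> f xs - c_lin * norm (xs - x)) \<longrightarrow>
             (\<forall>x\<in>box_cube r. f xs - f x \<le> min c_gap (c_lin * \<rho>_lin) \<longrightarrow>
                 x \<in> ball2 (box_cube r) \<rho>_lin xs))
       \<and> (\<forall>c_quad \<rho>_quad. c_quad > 0 \<and> \<rho>_quad > 0 \<and>
             (\<forall>x\<in>ball2 (box_cube r) \<rho>_quad xs. f x \<le> f xs - c_quad * (norm (xs - x))\<^sup>2) \<longrightarrow>
             (\<forall>x\<in>box_cube r. f xs - f x \<le> min c_gap (c_quad * \<rho>_quad\<^sup>2) \<longrightarrow>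
                 x \<in> ball2 (box_cube r) \<rho>_quad xs))"
proof (intro conjI allI impI ballI; elim conjE)
  fix c \<rho> x assume h: "\<forall>x\<in>ball2 (box_cube r) \<rho> xs. f x \<le> f xs - c * norm (xs - x)"
    and xX: "x \<in> box_cube r" and le: "f xs - f x \<le> min c_gap (c * \<rho>)" and "\<rho> > 0"
  have "\<forall>y\<in>box_cube r. norm (y - xs) = \<rho> \<longrightarrow> f y \<le> f xs - c * \<rho>"
    using h by (auto simp: ball2_def norm_minus_commute)
  from key[OF cont gap this xX _ le] show "x \<in> ball2 (box_cube r) \<rho> xs" using \<open>\<rho> > 0\<close> by simp
next
  fix c \<rho> x assume h: "\<forall>x\<in>ball2 (box_cube r) \<rho> xs. f x \<le> f xs - c * (norm (xs - x))\<^sup>2"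
    and xX: "x \<in> box_cube r" and le: "f xs - f x \<le> min c_gap (c * \<rho>\<^sup>2)" and "\<rho> > 0"
  have "\<forall>y\<in>box_cube r. norm (y - xs) = \<rho> \<longrightarrow> f y \<le> f xs - c * \<rho>\<^sup>2"
    using h by (auto simp: ball2_def norm_minus_commute)
  from key[OF cont gap this xX _ le] show "x \<in> ball2 (box_cube r) \<rho> xs" using \<open>\<rho> > 0\<close> by simp
qed

end
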